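(* Let $\Omega\subset\mathbb{C}^n$ be a bounded pseudoconvex Reinhardt domain, $1<p<\infty$, and $\lambda$ an admissible multi-radial weight on $\Omega$. Then the series $$K^{\Omega}_{p,\lambda}(z,w)=\sum_{\alpha\in\mathcal{S}_p(\Omega,\lambda)}\frac{e_\alpha(z)\,\overline{e_\alpha(w)}\,|e_\alpha(w)|^{p-2}}{\|e_\alpha\|^p_{p,\lambda}}$$ converges locally normally on $\Omega\times\Omega$, i.e., for every compact $K\subset\Omega\times\Omega$ the sum over $\alpha$ of the suprema over $K$ of the absolute values of the terms is finite.
   Context: A domain $\Omega$ is Reinhardt (centered at $0$) if $(e^{i\theta_1}z_1,\dots,e^{i\theta_n}z_n)\in\Omega$ whenever $z\in\Omega$, $\theta\in\mathbb{R}^n$. For a measurable $\lambda:\Omega\to[0,\infty]$, positive a.e., $\|f\|_{p,\lambda}^p=\int_\Omega|f|^p\lambda\,dV$ ($dV$ Lebesgue measure), $L^p(\Omega,\lambda)$ is the corresponding space and $A^p(\Omega,\lambda)=L^p(\Omega,\lambda)\cap\mathcal{O}(\Omega)$. The weight $\lambda$ is admissible if for each compact $K\subset\Omega$ there is $C_K>0$ with $\sup_K|f|\le C_K\|f\|_{p,\lambda}$ for all $f\in A^p(\Omega,\lambda)$; it is multi-radial if $\lambda(z)=\ell(|z_1|,\dots,|z_n|)$ for some function $\ell$. For $\alpha\in\mathbb{Z}^n$, $e_\alpha(z)=z_1^{\alpha_1}\cdots z_n^{\alpha_n}$, and $\mathcal{S}_p(\Omega,\lambda)=\{\alpha\in\mathbb{Z}^n:e_\alpha\in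 A^p(\Omega,\lambda)\}$. *)

theory Defs
  imports "HOL-Analysis.Analysis"
begin

definition reinhardt :: "(complex^'n) set \<Rightarrow> bool" where
  "reinhardt \<Omega> \<longleftrightarrow>
     (\<forall>z\<in>\<Omega>. \<forall>\<theta>::real^'n. (\<chi> i. cis (\<theta>$i) * z$i) \<in> \<Omega>)"

definition domain :: "(complex^'n) set \<Rightarrow> bool" where
  "domain \<Omega> \<longleftrightarrow> open \<Omega> \<and> connected \<Omega> \<and> \<Omega> \<noteq> {}"

definition holomorphic_n :: "(complex^'n \<Rightarrow> complex) \<Rightarrow> (complex^'n) set \<Rightarrow> bool" where
  "holomorphic_n f \<Omega> \<longleftrightarrow>
     (\<forall>z\<in>\<Omega>. \<exists>L. (f has_derivative L) (at z) \<and> (\<forall>c h. L (c *s h) = c * L h))"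

definition plurisubharmonic_on :: "(complex^'n) set \<Rightarrow> (complex^'n \<Rightarrow> real) \<Rightarrow> bool" where
  "plurisubharmonic_on \<Omega> u \<longleftrightarrow>
     (\<forall>z\<in>\<Omega>. \<forall>c. u z < c \<longrightarrow> (\<forall>\<^sub>F y in at z within \<Omega>. u y < c)) \<and>
     (\<forall>a b r. r > 0 \<and> (\<forall>\<zeta>. cmod \<zeta> \<le> r \<longrightarrow> a + \<zeta> *s b \<in> \<Omega>) \<longrightarrow>
        (\<lambda>t. u (a + (of_real r * cis t) *s b)) integrable_on {0..2*pi} \<and>
        u a \<le> integral {0..2*pi} (\<lambda>t. u (a + (of_real r * cis t) *s b)) / (2*pi))"

definition pseudoconvex :: "(complex^'n) set \<Rightarrow> bool" where
  "pseudoconvex \<Omega> \<longleftrightarrow> domain \<Omega> \<and>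
     plurisubharmonic_on \<Omega> (\<lambda>z. - ln (infdist z (- \<Omega>)))"

definition lp_pow :: "real \<Rightarrow> (complex^'n) set \<Rightarrow> (complex^'n \<Rightarrow> ennreal)
                      \<Rightarrow> (complex^'n \<Rightarrow> complex) \<Rightarrow> ennreal" where
  "lp_pow p \<Omega> lam f = (\<integral>\<^sup>+ z. indicator \<Omega> z * ennreal (cmod (f z) powr p) * lam z \<partial>lebesgue)"

definition lp_norm :: "real \<Rightarrow> (complex^'n) set \<Rightarrow> (complex^'n \<Rightarrow> ennreal)
                      \<Rightarrow> (complex^'n \<Rightarrow> complex) \<Rightarrow> real" where
  "lp_norm p \<Omega> lam f = enn2real (lp_pow p \<Omega> lam f) powr (1/p)"

definition Ap :: "real \<Rightarrow> (complex^'n) set \<Rightarrow> (complex^'n \<Rightarrow> ennreal)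
                  \<Rightarrow> (complex^'n \<Rightarrow> complex) set" where
  "Ap p \<Omega> lam = {f. holomorphic_n f \<Omega> \<and> lp_pow p \<Omega> lam f < \<infinity>}"

definition weight :: "(complex^'n) set \<Rightarrow> (complex^'n \<Rightarrow> ennreal) \<Rightarrow> bool" where
  "weight \<Omega> lam \<longleftrightarrow> lam \<in> borel_measurable lebesgue \<and>
     (AE z in lebesgue. z \<in> \<Omega> \<longrightarrow> lam z > 0)"

definition admissible :: "real \<Rightarrow> (complex^'n) set \<Rightarrow> (complex^'n \<Rightarrow> ennreal) \<Rightarrow> bool" where
  "admissible p \<Omega> lam \<longleftrightarrow>
     (\<forall>K. compact K \<and> K \<subseteq> \<Omega> \<longrightarrow>
        (\<exists>C>0. \<forall>f\<in>Ap p \<Omega> lam. \<forall>z\<in>K. cmod (f z) \<le> C * lp_norm p \<Omega> lam f))"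

definition multi_radial :: "(complex^'n) set \<Rightarrow> (complex^'n \<Rightarrow> ennreal) \<Rightarrow> bool" where
  "multi_radial \<Omega> lam \<longleftrightarrow> (\<exists>ell. \<forall>z\<in>\<Omega>. lam z = ell (\<chi> i. cmod (z$i)))"

definition e_mono :: "int^'n \<Rightarrow> complex^'n \<Rightarrow> complex" where
  "e_mono \<alpha> z = (\<Prod>i\<in>UNIV. (z$i) powi (\<alpha>$i))"

definition S_p :: "real \<Rightarrow> (complex^'n) set \<Rightarrow> (complex^'n \<Rightarrow> ennreal) \<Rightarrow> (int^'n) set" where
  "S_p p \<Omega> lam = {\<alpha>. e_mono \<alpha> \<in> Ap p \<Omega> lam}"

definition kterm :: "real \<Rightarrow> (complex^'n) set \<Rightarrow> (complex^'n \<Rightarrow> ennreal) \<Rightarrow> int^'n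
                     \<Rightarrow> complex^'n \<Rightarrow> complex^'n \<Rightarrow> complex" where
  "kterm p \<Omega> lam \<alpha> z w =
     e_mono \<alpha> z * cnj (e_mono \<alpha> w) * of_real (cmod (e_mono \<alpha> w) powr (p - 2))
       / of_real (enn2real (lp_pow p \<Omega> lam (e_mono \<alpha>)))"

end

theory Submission imports Defs "HOL-Library.FuncSet" begin
lemma geo_box:
  fixes \<rho> :: real assumes "0 \<le> \<rho>" "\<rho> < 1"
  shows "(\<Sum>k\<in>{-int M..int M}. \<rho> ^ nat \<bar>k\<bar>) = (1 + \<rho> - 2 * \<rho> ^ Suc M) / (1 - \<rho>)"
proof (induction M)
  case 0
  then show ?case using assms by simp
next
  case (Suc M)
  have eq: "{-int (Suc M)..int (Suc M)} = insert (int (Suc M)) (insert (- int (Suc M)) {-int M..int M})"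
    by auto
  have "(\<Sum>k\<in>{-int (Suc M)..int (Suc M)}. \<rho> ^ nat \<bar>k\<bar>) = \<rho> ^ Suc M + \<rho> ^ Suc M + (\<Sum>k\<in>{-int M..int M}. \<rho> ^ nat \<bar>k\<bar>)"
    proof -
    have "nat (1 + int M) = Suc M" "nat (int M + 1) = Suc M" by simp_all
    then show ?thesis unfolding eq by (simp add: nat_int)
  qed
  also have "\<dots> = (1 + \<rho> - 2 * \<rho> ^ Suc (Suc M)) / (1 - \<rho>)"
    proof -
    have "1 - \<rho> \<noteq> 0" using assms by simp
    then show ?thesis unfolding Suc.IH by (simp add: field_simps)
  qed
  finally show ?case .
qed

lemma geo_int:
  fixes \<rho> :: real and P :: "int set" assumes "0 \<le> \<rho>" "\<rho> < 1" "finite P"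
  shows "(\<Sum>k\<in>P. \<rho> ^ nat \<bar>k\<bar>) \<le> 2 / (1 - \<rho>)"
proof -
  define M where "M = nat (Max (insert 0 (abs ` P)))"
  have M: "P \<subseteq> {-int M..int M}"
  proof
    fix k assume "k \<in> P"
    then have "\<bar>k\<bar> \<le> Max (insert 0 (abs ` P))" using assms(3) by (intro Max_ge) auto
    then show "k \<in> {-int M..int M}" unfolding M_def by auto
  qed
  have "(\<Sum>k\<in>P. \<rho> ^ nat \<bar>k\<bar>) \<le> (\<Sum>k\<in>{-int M..int M}. \<rho> ^ nat \<bar>k\<bar>)"
    using M assms by (intro sum_mono2) auto
  also have "\<dots> = (1 + \<rho> - 2 * \<rho> ^ Suc M) / (1 - \<rho>)" using geo_box assms by blast
  also have "\<dots> \<le> 2 / (1 - \<rho>)"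
    proof -
    have "0 \<le> \<rho> * \<rho> ^ M" using assms by simp
    moreover have "\<rho> ^ Suc M = \<rho> * \<rho> ^ M" by simp
    ultimately have "1 + \<rho> - 2 * \<rho> ^ Suc M \<le> 2" using assms by linarith
    then show ?thesis using assms by (intro divide_right_mono) auto
  qed
  finally show ?thesis .
qed

lemma prod_bound:
  fixes \<rho> :: real and F :: "(int^'n) set" assumes "0 \<le> \<rho>" "\<rho> < 1" "finite F"
  shows "(\<Sum>\<alpha>\<in>F. \<Prod>i\<in>UNIV. \<rho> ^ nat \<bar>\<alpha>$i\<bar>) \<le> (2 / (1 - \<rho>)) ^ CARD('n)"
proof -
  define P where "P i = (\<lambda>\<alpha>. \<alpha>$i) ` F" for i
  have finP: "finite (P i)" for i using assms(3) by (simp add: P_def)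
  have sub: "F \<subseteq> vec_lambda ` (PiE UNIV P)"
  proof
    fix \<alpha> assume "\<alpha> \<in> F"
    then have "vec_nth \<alpha> \<in> PiE UNIV P" by (auto simp: P_def)
    then show "\<alpha> \<in> vec_lambda ` (PiE UNIV P)" by (metis image_eqI vec_nth_inverse)
  qed
  have fin2: "finite (PiE UNIV P)" using finP by (simp add: finite_PiE)
  have "(\<Sum>\<alpha>\<in>F. \<Prod>i\<in>UNIV. \<rho> ^ nat \<bar>\<alpha>$i\<bar>) \<le> (\<Sum>\<alpha>\<in>vec_lambda ` (PiE UNIV P). \<Prod>i\<in>UNIV. \<rho> ^ nat \<bar>\<alpha>$i\<bar>)"
    using sub fin2 assms by (intro sum_mono2) (auto intro: prod_nonneg)
  also have "\<dots> = (\<Sum>g\<in>PiE UNIV P. \<Prod>i\<in>UNIV. \<rho> ^ nat \<bar>g i\<bar>)"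
    by (subst sum.reindex) (auto simp: inj_on_def vec_lambda_inject)
  also have "\<dots> = (\<Prod>i\<in>UNIV. \<Sum>k\<in>P i. \<rho> ^ nat \<bar>k\<bar>)"
    by (rule prod_sum_PiE[symmetric]) (auto simp: finP)
  also have "\<dots> \<le> (\<Prod>i\<in>(UNIV::'n set). 2 / (1 - \<rho>))"
    using assms finP by (intro prod_mono) (auto intro: sum_nonneg geo_int)
  also have "\<dots> = (2 / (1 - \<rho>)) ^ CARD('n)" by simp
  finally show ?thesis .
qed
lemma key: fixes a b N C R p :: real
  assumes "0 \<le> a" "0 \<le> b" "N > 0" "C > 0" "R > 0" "p > 1"
    "a \<le> C * N powr (1/p) / R" "b \<le> C * N powr (1/p) / R"
  shows "a * b powr (p - 1) / N \<le> C powr p * inverse R powr p"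
proof -
  define c where "c = C * N powr (1/p) / R"
  have c0: "c > 0" using assms by (simp add: c_def)
  have "a * b powr (p - 1) \<le> c * c powr (p - 1)"
    using assms c0 by (intro mult_mono powr_mono2) (auto simp: c_def)
  also have "\<dots> = c powr p"
    using c0 powr_add[of c 1 "p - 1"] by simp
  also have "\<dots> = C powr p * N * inverse R powr p"
    using assms by (simp add: c_def powr_mult powr_divide powr_powr inverse_powr divide_inverse)
  finally show ?thesis using assms by (simp add: divide_le_eq mult.commute mult.left_commute)
qed
lemma scale_mono:
  fixes r :: real and z :: "complex^'n" and \<alpha> :: "int^'n"
  assumes "r > 0"
  shows "cmod (e_mono \<alpha> (\<chi> i. of_real (if 0 \<le> \<alpha>$i then r else inverse r) * z$i))
       = (\<Prod>i\<in>UNIV. r ^ nat \<bar>\<alpha>$i\<bar>) * cmod (e_mono \<alpha> z)"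
proof -
  have f: "cmod (complex_of_real (if 0 \<le> \<alpha>$i then r else inverse r) powi (\<alpha>$i)) = r ^ nat \<bar>\<alpha>$i\<bar>" for i
  proof (cases "0 \<le> \<alpha>$i")
    case True
    then show ?thesis using assms by (simp add: power_int_nonneg_exp norm_power)
  next
    case False
    then have "cmod (complex_of_real (inverse r) powi (\<alpha>$i)) = inverse r powi (\<alpha>$i)"
      using assms by (simp add: norm_power_int norm_inverse)
    also have "\<dots> = r powi (- (\<alpha>$i))" by (simp add: power_int_inverse power_int_minus)
    also have "\<dots> = r ^ nat \<bar>\<alpha>$i\<bar>" using False by (simp add: power_int_nonneg_exp)
    finally show ?thesis using False by simp
  qed
  have "cmod (e_mono \<alpha> (\<chi> i. of_real (if 0 \<le> \<alpha>$i then r else inverse r) * z$i))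
     = (\<Prod>i\<in>UNIV. cmod (complex_of_real (if 0 \<le> \<alpha>$i then r else inverse r) powi (\<alpha>$i)) * cmod (z$i powi (\<alpha>$i)))"
    unfolding e_mono_def by (simp add: prod_norm[symmetric] power_int_mult_distrib norm_mult del: of_real_inverse)
  also have "\<dots> = (\<Prod>i\<in>UNIV. r ^ nat \<bar>\<alpha>$i\<bar> * cmod (z$i powi (\<alpha>$i)))" by (simp only: f)
  also have "\<dots> = (\<Prod>i\<in>UNIV. r ^ nat \<bar>\<alpha>$i\<bar>) * cmod (e_mono \<alpha> z)"
    unfolding e_mono_def by (simp add: prod.distrib prod_norm)
  finally show ?thesis .
qed
theorem theorem3p1:
  fixes \<Omega> :: "(complex^'n) set" and p :: real and lam :: "complex^'n \<Rightarrow> ennreal"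
  assumes "bounded \<Omega>" and "pseudoconvex \<Omega>" and "reinhardt \<Omega>"
    and "1 < p"
    and "weight \<Omega> lam" and "admissible p \<Omega> lam" and "multi_radial \<Omega> lam"
  shows "\<forall>K. compact K \<and> K \<subseteq> \<Omega> \<times> \<Omega> \<longrightarrow>
           infsum (\<lambda>\<alpha>. SUP x\<in>K. ennreal (cmod (kterm p \<Omega> lam \<alpha> (fst x) (snd x)))) (S_p p \<Omega> lam) < \<infinity>"
proof (intro allI impI)
  fix K :: "((complex^'n) \<times> (complex^'n)) set" assume K: "compact K \<and> K \<subseteq> \<Omega> \<times> \<Omega>"
  have openO: "open \<Omega>" using assms(2) by (simp add: pseudoconvex_def domain_def)
  define K1 where "K1 = fst ` K \<union> snd ` K"
  have cK1: "compact K1" unfolding K1_def using K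
    by (intro compact_Un compact_continuous_image continuous_intros) auto
  have K1O: "K1 \<subseteq> \<Omega>" unfolding K1_def using K by auto
  obtain \<delta> where \<delta>: "\<delta> > 0" "(\<Union>x\<in>K1. cball x \<delta>) \<subseteq> \<Omega>"
    using compact_subset_open_imp_cball_epsilon_subset[OF cK1 openO K1O] by blast
  define K' where "K' = (\<Union>x\<in>K1. \<Union>y\<in>cball 0 \<delta>. {x + y})"
  have cK': "compact K'" unfolding K'_def by (intro compact_sums' cK1) auto
  have K'O: "K' \<subseteq> \<Omega>"
  proof
    fix u assume "u \<in> K'"
    then obtain x y where xy: "x \<in> K1" "y \<in> cball 0 \<delta>" "u = x + y" unfolding K'_def by auto
    then have "u \<in> cball x \<delta>" by (simp add: dist_norm)
    then show "u \<in> \<Omega>" using \<delta>(2) xy(1) by blast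
  qed
  obtain C where C: "C > 0" "\<And>f z. f \<in> Ap p \<Omega> lam \<Longrightarrow> z \<in> K' \<Longrightarrow> cmod (f z) \<le> C * lp_norm p \<Omega> lam f"
    using assms(6) cK' K'O unfolding admissible_def by meson
  obtain R where R: "R > 0" "\<And>z. z \<in> K1 \<Longrightarrow> norm z \<le> R"
    using compact_imp_bounded[OF cK1] unfolding bounded_pos by blast
  define r where "r = 1 + \<delta> / (real CARD('n) * R + 1)"
  have rpos: "r - 1 > 0" unfolding r_def using \<delta> R by (simp add: add_pos_nonneg)
  have r1: "r > 1" using rpos by simp
  have rd: "real CARD('n) * ((r - 1) * R) \<le> \<delta>"
  proof -
    have "real CARD('n) * ((r - 1) * R) = \<delta> * (real CARD('n) * R) / (real CARD('n) * R + 1)"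
      unfolding r_def by (simp add: field_simps)
    also have "\<dots> \<le> \<delta>"
    proof -
      have h0: "0 \<le> real CARD('n) * R" using R(1) by simp
      then have h: "0 < real CARD('n) * R + 1" by linarith
      have "\<delta> * (real CARD('n) * R) \<le> \<delta> * (real CARD('n) * R + 1)" using \<delta>(1) by simp
      then show ?thesis using h by (simp add: divide_le_eq)
    qed
    finally show ?thesis .
  qed
  define \<zeta> where "\<zeta> \<alpha> z = (\<chi> i. of_real (if 0 \<le> \<alpha>$i then r else inverse r) * z$i)" for \<alpha> :: "int^'n" and z :: "complex^'n"
  have \<zeta>K': "\<zeta> \<alpha> z \<in> K'" if z: "z \<in> K1" for \<alpha> z
  proof -
    have comp: "norm ((\<zeta> \<alpha> z - z) $ i) \<le> (r - 1) * R" for i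
    proof -
      have c: "cmod (complex_of_real (if 0 \<le> \<alpha>$i then r else inverse r) - 1) \<le> r - 1"
      proof (cases "0 \<le> \<alpha>$i")
        case True
        have "complex_of_real r - 1 = complex_of_real (r - 1)" by simp
        then have "cmod (complex_of_real r - 1) = r - 1" using r1 by (simp only: norm_of_real)
        then show ?thesis using True by simp
      next
        case False
        have "cmod (complex_of_real (inverse r) - 1) = 1 - inverse r"
        proof -
          have "complex_of_real (inverse r) - 1 = complex_of_real (inverse r - 1)" by simp
          then have "cmod (complex_of_real (inverse r) - 1) = \<bar>inverse r - 1\<bar>" by (simp only: norm_of_real)
          moreover have "inverse r \<le> 1" using r1 by (simp add: inverse_le_1_iff)
          ultimately show ?thesis by simp
        qed
        also have "\<dots> \<le> r - 1" using r1 sum_squares_ge_zero[of "r - 1" 0] by (simp add: field_simps power2_eq_square algebra_simps)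
        finally show ?thesis using False by simp
      qed
      have "(\<zeta> \<alpha> z - z) $ i = (complex_of_real (if 0 \<le> \<alpha>$i then r else inverse r) - 1) * z$i"
        unfolding \<zeta>_def by (simp add: algebra_simps)
      then have "norm ((\<zeta> \<alpha> z - z) $ i) = cmod (complex_of_real (if 0 \<le> \<alpha>$i then r else inverse r) - 1) * cmod (z$i)"
        by (simp add: norm_mult)
      also have "\<dots> \<le> (r - 1) * R"
      proof -
        have "cmod (z$i) \<le> norm z" by (rule Finite_Cartesian_Product.norm_nth_le)
        then have "cmod (z$i) \<le> R" using R(2)[OF z] by linarith
        then show ?thesis using c rpos by (intro mult_mono) auto
      qed
      finally show ?thesis .
    qed
    have "norm (\<zeta> \<alpha> z - z) \<le> (\<Sum>i\<in>UNIV. norm ((\<zeta> \<alpha> z - z) $ i))"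
      unfolding norm_vec_def by (rule L2_set_le_sum) auto
    also have "\<dots> \<le> (\<Sum>i\<in>(UNIV::'n set). (r - 1) * R)" by (intro sum_mono comp)
    also have "\<dots> \<le> \<delta>" using rd by simp
    finally have "\<zeta> \<alpha> z - z \<in> cball 0 \<delta>" by simp
    then show ?thesis unfolding K'_def using z by force
  qed
  define Ra where "Ra \<alpha> = (\<Prod>i\<in>UNIV. r ^ nat \<bar>\<alpha>$i\<bar>)" for \<alpha> :: "int^'n"
  have Rapos: "Ra \<alpha> > 0" for \<alpha> unfolding Ra_def using r1 by (intro prod_pos) auto
  have \<zeta>norm: "cmod (e_mono \<alpha> (\<zeta> \<alpha> z)) = Ra \<alpha> * cmod (e_mono \<alpha> z)" for \<alpha> z
    unfolding \<zeta>_def Ra_def using r1 by (intro scale_mono) simp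
  define \<rho> where "\<rho> = inverse (r powr p)"
  have \<rho>0: "0 \<le> \<rho>" unfolding \<rho>_def by simp
  have \<rho>1: "\<rho> < 1" unfolding \<rho>_def using r1 assms(4)
    by (simp add: inverse_less_1_iff)
  have Ra\<rho>: "inverse (Ra \<alpha>) powr p = (\<Prod>i\<in>UNIV. \<rho> ^ nat \<bar>\<alpha>$i\<bar>)" for \<alpha>
  proof -
    have "inverse (r ^ k) powr p = \<rho> ^ k" for k
      unfolding \<rho>_def using r1
      by (smt (verit, best) powr_gt_zero powr_minus powr_powr_swap powr_realpow inverse_powr)
    then show ?thesis unfolding Ra_def by (simp add: prod_inversef[symmetric] o_def prod_powr_distrib)
  qed
  define G where "G \<alpha> = C powr p * (\<Prod>i\<in>UNIV. \<rho> ^ nat \<bar>\<alpha>$i\<bar>)" for \<alpha> :: "int^'n"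
  have G0: "G \<alpha> \<ge> 0" for \<alpha> unfolding G_def using \<rho>0 by (intro mult_nonneg_nonneg prod_nonneg) auto
  have bound: "cmod (kterm p \<Omega> lam \<alpha> (fst x) (snd x)) \<le> G \<alpha>" if \<alpha>: "\<alpha> \<in> S_p p \<Omega> lam" and x: "x \<in> K" for \<alpha> x
  proof -
    define N where "N = enn2real (lp_pow p \<Omega> lam (e_mono \<alpha>))"
    have N0: "N \<ge> 0" unfolding N_def by simp
    have Ap: "e_mono \<alpha> \<in> Ap p \<Omega> lam" using \<alpha> by (simp add: S_p_def)
    have lpn: "lp_norm p \<Omega> lam (e_mono \<alpha>) = N powr (1/p)" by (simp add: lp_norm_def N_def)
    have est: "cmod (e_mono \<alpha> z) \<le> C * N powr (1/p) / Ra \<alpha>" if z: "z \<in> K1" for z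
    proof -
      have "Ra \<alpha> * cmod (e_mono \<alpha> z) \<le> C * N powr (1/p)"
        using C(2)[OF Ap \<zeta>K'[OF z, of \<alpha>]] \<zeta>norm[of \<alpha> z] lpn by simp
      then show ?thesis using Rapos[of \<alpha>] by (simp add: field_simps)
    qed
    have z: "fst x \<in> K1" and w: "snd x \<in> K1" using x unfolding K1_def by auto
    define a where "a = cmod (e_mono \<alpha> (fst x))"
    define b where "b = cmod (e_mono \<alpha> (snd x))"
    have kt: "cmod (kterm p \<Omega> lam \<alpha> (fst x) (snd x)) = a * (b * b powr (p - 2)) / N"
      unfolding kterm_def a_def b_def N_def by (simp add: norm_mult norm_divide)
    have bb: "b * b powr (p - 2) = b powr (p - 1)"
    proof (cases "b = 0")
      case True then show ?thesis by simp
    next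
      case False
      then have "b > 0" unfolding b_def by simp
      then show ?thesis using powr_add[of b 1 "p - 2"] by simp
    qed
    show ?thesis
    proof (cases "N = 0")
      case True
      then show ?thesis using G0[of \<alpha>] kt by simp
    next
      case False
      then have Npos: "N > 0" using N0 by simp
      have "cmod (kterm p \<Omega> lam \<alpha> (fst x) (snd x)) = a * b powr (p - 1) / N" using kt bb by simp
      also have "\<dots> \<le> C powr p * inverse (Ra \<alpha>) powr p"
        by (rule key) (use Npos C(1) Rapos assms(4) est[OF z] est[OF w] in \<open>auto simp: a_def b_def\<close>)
      also have "\<dots> = G \<alpha>" unfolding G_def Ra\<rho> ..
      finally show ?thesis .
    qed
  qed
  have fin: "sum (\<lambda>\<alpha>. SUP x\<in>K. ennreal (cmod (kterm p \<Omega> lam \<alpha> (fst x) (snd x)))) F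
            \<le> ennreal (C powr p * (2 / (1 - \<rho>)) ^ CARD('n))"
    if F: "finite F" "F \<subseteq> S_p p \<Omega> lam" for F
  proof -
    have "sum (\<lambda>\<alpha>. SUP x\<in>K. ennreal (cmod (kterm p \<Omega> lam \<alpha> (fst x) (snd x)))) F \<le> sum (\<lambda>\<alpha>. ennreal (G \<alpha>)) F"
      using F bound by (intro sum_mono SUP_least ennreal_leI) auto
    also have "\<dots> = ennreal (sum G F)" using G0 by simp
    also have "\<dots> \<le> ennreal (C powr p * (2 / (1 - \<rho>)) ^ CARD('n))"
    proof (rule ennreal_leI)
      have "sum G F = C powr p * (\<Sum>\<alpha>\<in>F. \<Prod>i\<in>UNIV. \<rho> ^ nat \<bar>\<alpha>$i\<bar>)"
        unfolding G_def by (simp add: sum_distrib_left)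
      also have "\<dots> \<le> C powr p * (2 / (1 - \<rho>)) ^ CARD('n)"
        using prod_bound[OF \<rho>0 \<rho>1 F(1)] by (intro mult_left_mono) auto
      finally show "sum G F \<le> C powr p * (2 / (1 - \<rho>)) ^ CARD('n)" .
    qed
    finally show ?thesis .
  qed
  have "infsum (\<lambda>\<alpha>. SUP x\<in>K. ennreal (cmod (kterm p \<Omega> lam \<alpha> (fst x) (snd x)))) (S_p p \<Omega> lam)
       \<le> ennreal (C powr p * (2 / (1 - \<rho>)) ^ CARD('n))"
    by (rule infsum_le_finite_sums) (auto intro: fin simp: nonneg_summable_on_complete)
  also have "\<dots> < \<infinity>" by simp
  finally show "infsum (\<lambda>\<alpha>. SUP x\<in>K. ennreal (cmod (kterm p \<Omega> lam \<alpha> (fst x) (snd x)))) (S_p p \<Omega> lam) < \<infinity>" .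
qed

end
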